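(* In the setup described in the context, assume the Levi-Civita connection $\nabla$ of $g$ is locally flat, i.e. $R=0$. Then $(M,\tilde g,Q)$ is an almost Einstein manifold, and $$\tilde\rho(x,y)=\frac{3\tilde\tau^*+\tilde\tau}{8}\,g(x,y)+\frac{3\tilde\tau+\tilde\tau^*}{8}\,\tilde g(x,y).$$
   Context: Let $M$ be a 3-dimensional smooth manifold. Fix a coordinate chart $(x^1,x^2,x^3)$ with coordinate vector fields $\partial_i$. Structures: - $g$ is a Riemannian metric with $g(\partial_1,\partial_1)=g(\partial_2,\partial_2)=A$, $g(\partial_3,\partial_3)=B$ and $g(\partial_i,\partial_j)=0$ for $i\ne j$. Here $A,B$ are smooth positive functions. - $Q$ is the $(1,1)$-tensor field with $Q\partial_1=\partial_2$, $Q\partial_2=-\partial_1$, $Q\partial_3=\partial_3$. - $P=Q^2$ and $\tilde g(x,y)=g(x,Py)$. Connections and curvature: - $\nabla$ and $\tilde\nabla$ are the Levi-Civita connections of $g$ and $\tilde g$, with curvature tensors $R$ and $\tilde R$ defined by $R(x,y)z=\nabla_x\nabla_yz-\nabla_y\nabla_xz-\nabla_{[x,y]}z$ (analogously for $\tilde R$). - $\tilde R(x,y,z,t)=\tilde g(\tilde R(x,y)z,t)$. Ricci tensor and scalar quantities: - $\tilde\rho(y,z)=\tilde g^{ij}\tilde R(e_i,y,z,e_j)$. - $\tilde\tau=\tilde g^{ij}\tilde\rho(e_i,e_j)$ and $\tilde\tau^*=g^{ij}\tilde\rho(e_i,e_j)$. Definition. $(M,\tilde g,Q)$ is almost Einstein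 if $\tilde\rho=\alpha g+\beta\tilde g$ for smooth functions $\alpha,\beta$. *)

theory Defs
  imports "HOL-Analysis.Analysis"
begin

text \<open>Coordinate framework: the chart domain is an open set U of real^3, points p,
 coordinate vector field d_i corresponds to axis i 1, a (0,2)-tensor field is a matrix-valued
 function p -> (G p $ i $ j) = G(d_i, d_j) at p, a (1,1)-tensor field is a matrix whose
 j-th column holds the components of the image of d_j.\<close>

definition pd :: "3 \<Rightarrow> (real^3 \<Rightarrow> real) \<Rightarrow> real^3 \<Rightarrow> real" where
  "pd i f p = frechet_derivative f (at p) (axis i 1)"

fun Ck_on :: "nat \<Rightarrow> (real^3) set \<Rightarrow> (real^3 \<Rightarrow> real) \<Rightarrow> bool" where
  "Ck_on 0 U f = continuous_on U f"
| "Ck_on (Suc k) U f = ((\<forall>p\<in>U. f differentiable (at p)) \<and> (\<forall>i. Ck_on k U (pd i f)))"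

definition smooth_on :: "(real^3) set \<Rightarrow> (real^3 \<Rightarrow> real) \<Rightarrow> bool" where
  "smooth_on U f = (\<forall>k. Ck_on k U f)"

definition ginv :: "(real^3 \<Rightarrow> real^3^3) \<Rightarrow> real^3 \<Rightarrow> real^3^3" where
  "ginv G p = matrix_inv (G p)"

text \<open>Christoffel symbols of the Levi-Civita connection: nabla_{d_i} d_j = sum_k christ k i j d_k\<close>
definition christ :: "(real^3 \<Rightarrow> real^3^3) \<Rightarrow> 3 \<Rightarrow> 3 \<Rightarrow> 3 \<Rightarrow> real^3 \<Rightarrow> real" where
  "christ G k i j p = (1/2) * (\<Sum>l\<in>UNIV. ginv G p $ k $ l *
      (pd i (\<lambda>q. G q $ j $ l) p + pd j (\<lambda>q. G q $ i $ l) p - pd l (\<lambda>q. G q $ i $ j) p))"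

text \<open>R(d_i,d_j)d_k = sum_l curv G i j k l p d_l, with
  R(x,y)z = nabla_x nabla_y z - nabla_y nabla_x z - nabla_[x,y] z\<close>
definition curv :: "(real^3 \<Rightarrow> real^3^3) \<Rightarrow> 3 \<Rightarrow> 3 \<Rightarrow> 3 \<Rightarrow> 3 \<Rightarrow> real^3 \<Rightarrow> real" where
  "curv G i j k l p = pd i (christ G l j k) p - pd j (christ G l i k) p
     + (\<Sum>m\<in>UNIV. christ G m j k p * christ G l i m p - christ G m i k p * christ G l j m p)"

definition bil :: "(real^3 \<Rightarrow> real^3^3) \<Rightarrow> real^3 \<Rightarrow> real^3 \<Rightarrow> real^3 \<Rightarrow> real" where
  "bil G p x y = (\<Sum>i\<in>UNIV. \<Sum>j\<in>UNIV. x $ i * G p $ i $ j * y $ j)"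

definition curv_vec :: "(real^3 \<Rightarrow> real^3^3) \<Rightarrow> real^3 \<Rightarrow> real^3 \<Rightarrow> real^3 \<Rightarrow> real^3 \<Rightarrow> real^3" where
  "curv_vec G p x y z = (\<chi> l. \<Sum>i\<in>UNIV. \<Sum>j\<in>UNIV. \<Sum>k\<in>UNIV. x $ i * y $ j * z $ k * curv G i j k l p)"

definition curv4 :: "(real^3 \<Rightarrow> real^3^3) \<Rightarrow> real^3 \<Rightarrow> real^3 \<Rightarrow> real^3 \<Rightarrow> real^3 \<Rightarrow> real^3 \<Rightarrow> real" where
  "curv4 G p x y z t = bil G p (curv_vec G p x y z) t"

definition ricci :: "(real^3 \<Rightarrow> real^3^3) \<Rightarrow> real^3 \<Rightarrow> real^3 \<Rightarrow> real^3 \<Rightarrow> real" where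
  "ricci G p y z = (\<Sum>i\<in>UNIV. \<Sum>j\<in>UNIV. ginv G p $ i $ j * curv4 G p (axis i 1) y z (axis j 1))"

definition tau :: "(real^3 \<Rightarrow> real^3^3) \<Rightarrow> real^3 \<Rightarrow> real" where
  "tau Gt p = (\<Sum>i\<in>UNIV. \<Sum>j\<in>UNIV. ginv Gt p $ i $ j * ricci Gt p (axis i 1) (axis j 1))"

definition tau_star :: "(real^3 \<Rightarrow> real^3^3) \<Rightarrow> (real^3 \<Rightarrow> real^3^3) \<Rightarrow> real^3 \<Rightarrow> real" where
  "tau_star G Gt p = (\<Sum>i\<in>UNIV. \<Sum>j\<in>UNIV. ginv G p $ i $ j * ricci Gt p (axis i 1) (axis j 1))"

definition gmet :: "(real^3 \<Rightarrow> real) \<Rightarrow> (real^3 \<Rightarrow> real) \<Rightarrow> real^3 \<Rightarrow> real^3^3" where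
  "gmet A B p = (\<chi> i j. if i \<noteq> j then 0 else if i = 3 then B p else A p)"

definition Qmat :: "real^3^3" where
  "Qmat = (\<chi> i j. if i = 2 \<and> j = 1 then 1 else if i = 1 \<and> j = 2 then -1
                    else if i = 3 \<and> j = 3 then 1 else 0)"

definition Pmat :: "real^3^3" where
  "Pmat = Qmat ** Qmat"

text \<open>gt(x,y) = g(x, P y)\<close>
definition gtil :: "(real^3 \<Rightarrow> real) \<Rightarrow> (real^3 \<Rightarrow> real) \<Rightarrow> real^3 \<Rightarrow> real^3^3" where
  "gtil A B p = gmet A B p ** Pmat"

definition almost_Einstein :: "(real^3) set \<Rightarrow> (real^3 \<Rightarrow> real^3^3) \<Rightarrow> (real^3 \<Rightarrow> real^3^3) \<Rightarrow> bool" where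
  "almost_Einstein U G Gt = (\<exists>\<alpha> \<beta>. smooth_on U \<alpha> \<and> smooth_on U \<beta> \<and>
     (\<forall>p\<in>U. \<forall>x y. ricci Gt p x y = \<alpha> p * bil G p x y + \<beta> p * bil Gt p x y))"

end

theory Submission
  imports Defs
begin


lemma pd_has: "(f has_derivative f') (at p) \<Longrightarrow> pd i f p = f' (axis i 1)"
  unfolding pd_def using frechet_derivative_at by metis

lemma pd_const[simp]: "pd i (\<lambda>q. c) p = 0"
  by (rule pd_has[of _ "\<lambda>_. 0", simplified]) (rule has_derivative_const)

lemma pd_add: "f differentiable at p \<Longrightarrow> g differentiable at p \<Longrightarrow>
   pd i (\<lambda>q. f q + g q) p = pd i f p + pd i g p"
proof -
  assume a: "f differentiable at p" "g differentiable at p"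
  then obtain f' g' where d: "(f has_derivative f') (at p)" "(g has_derivative g') (at p)"
    unfolding differentiable_def by blast
  have "((\<lambda>q. f q + g q) has_derivative (\<lambda>h. f' h + g' h)) (at p)"
    by (rule has_derivative_add[OF d])
  from pd_has[OF this] pd_has[OF d(1)] pd_has[OF d(2)] show ?thesis by simp
qed

lemma pd_diff: "f differentiable at p \<Longrightarrow> g differentiable at p \<Longrightarrow>
   pd i (\<lambda>q. f q - g q) p = pd i f p - pd i g p"
proof -
  assume a: "f differentiable at p" "g differentiable at p"
  then obtain f' g' where d: "(f has_derivative f') (at p)" "(g has_derivative g') (at p)"
    unfolding differentiable_def by blast
  have "((\<lambda>q. f q - g q) has_derivative (\<lambda>h. f' h - g' h)) (at p)"
    by (rule has_derivative_diff[OF d])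
  from pd_has[OF this] pd_has[OF d(1)] pd_has[OF d(2)] show ?thesis by simp
qed

lemma pd_mult: "f differentiable at p \<Longrightarrow> g differentiable at p \<Longrightarrow>
   pd i (\<lambda>q. f q * g q) p = pd i f p * g p + f p * pd i g p"
proof -
  assume a: "f differentiable at p" "g differentiable at p"
  then obtain f' g' where d: "(f has_derivative f') (at p)" "(g has_derivative g') (at p)"
    unfolding differentiable_def by blast
  have "((\<lambda>q. f q * g q) has_derivative (\<lambda>h. f p * g' h + f' h * g p)) (at p)"
    by (rule has_derivative_mult[OF d])
  from pd_has[OF this] pd_has[OF d(1)] pd_has[OF d(2)] show ?thesis by simp
qed

lemma pd_inverse: "f differentiable at p \<Longrightarrow> f p \<noteq> 0 \<Longrightarrow>
   pd i (\<lambda>q. inverse (f q)) p = - pd i f p * (inverse (f p))^2"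
proof -
  assume a: "f differentiable at p" "f p \<noteq> 0"
  then obtain f' where d: "(f has_derivative f') (at p)"
    unfolding differentiable_def by blast
  have "((\<lambda>q. inverse (f q)) has_derivative (\<lambda>h. - (inverse (f p) * f' h * inverse (f p)))) (at p)"
    by (rule Deriv.has_derivative_inverse[OF a(2) d])
  from pd_has[OF this] pd_has[OF d] show ?thesis by (simp add: power2_eq_square)
qed

lemma pd_cong: "open U \<Longrightarrow> p \<in> U \<Longrightarrow> (\<And>q. q \<in> U \<Longrightarrow> f q = g q) \<Longrightarrow> pd i f p = pd i g p"
proof -
  assume a: "open U" "p \<in> U" "\<And>q. q \<in> U \<Longrightarrow> f q = g q"
  have "frechet_derivative f (at p) = frechet_derivative g (at p)"
    unfolding frechet_derivative_def
  proof (rule arg_cong[where f=Eps], rule ext)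
    fix f'
    show "(f has_derivative f') (at p) = (g has_derivative f') (at p)"
      using has_derivative_transform_within_open[of f f' p UNIV U g, OF _ a(1) a(2)]
            has_derivative_transform_within_open[of g f' p UNIV U f, OF _ a(1) a(2)] a(3) by auto
  qed
  then show ?thesis unfolding pd_def by simp
qed

lemma diff_cong: "open U \<Longrightarrow> p \<in> U \<Longrightarrow> (\<And>q. q \<in> U \<Longrightarrow> f q = g q) \<Longrightarrow> f differentiable at p \<Longrightarrow> g differentiable at p"
  unfolding differentiable_def
  using has_derivative_transform_within_open by blast




lemma Ck_Suc_diff: "Ck_on (Suc k) U f \<Longrightarrow> p \<in> U \<Longrightarrow> f differentiable at p"
  by simp

lemma Ck_mono: "Ck_on (Suc k) U f \<Longrightarrow> Ck_on k U f"
proof (induction k arbitrary: f)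
  case 0
  then show ?case
    by (auto intro!: continuous_at_imp_continuous_on differentiable_imp_continuous_within)
next
  case (Suc k)
  then show ?case by auto
qed

lemma Ck_cong: "open U \<Longrightarrow> (\<And>q. q \<in> U \<Longrightarrow> f q = g q) \<Longrightarrow> Ck_on k U f = Ck_on k U g"
proof (induction k arbitrary: f g)
  case 0
  then show ?case using continuous_on_cong by auto
next
  case (Suc k)
  have d: "(\<forall>p\<in>U. f differentiable at p) = (\<forall>p\<in>U. g differentiable at p)"
    using diff_cong[OF Suc.prems(1)] Suc.prems(2) by metis
  have "Ck_on k U (pd i f) = Ck_on k U (pd i g)" for i
    by (rule Suc.IH[OF Suc.prems(1)], rule pd_cong[OF Suc.prems(1)]) (use Suc.prems(2) in auto)
  then show ?case using d by simp
qed

lemma pd_const_fun: "pd i (\<lambda>q. c) = (\<lambda>p. 0)"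
  by (rule ext) simp

lemma Ck_const: "Ck_on k U (\<lambda>q. c)"
  by (induction k arbitrary: c) (auto simp: pd_const_fun)

lemma Ck_add: "open U \<Longrightarrow> Ck_on k U f \<Longrightarrow> Ck_on k U g \<Longrightarrow> Ck_on k U (\<lambda>q. f q + g q)"
proof (induction k arbitrary: f g)
  case 0 then show ?case by (auto intro: continuous_on_add)
next
  case (Suc k)
  have "Ck_on k U (pd i (\<lambda>q. f q + g q))" for i
  proof -
    have "Ck_on k U (pd i (\<lambda>q. f q + g q)) = Ck_on k U (\<lambda>q. pd i f q + pd i g q)"
      by (rule Ck_cong[OF Suc.prems(1)]) (use Suc.prems pd_add in auto)
    then show ?thesis using Suc by auto
  qed
  then show ?case using Suc.prems by auto
qed

lemma Ck_mult: "open U \<Longrightarrow> Ck_on k U f \<Longrightarrow> Ck_on k U g \<Longrightarrow> Ck_on k U (\<lambda>q. f q * g q)"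
proof (induction k arbitrary: f g)
  case 0 then show ?case by (auto intro: continuous_on_mult)
next
  case (Suc k)
  have "Ck_on k U (pd i (\<lambda>q. f q * g q))" for i
  proof -
    have "Ck_on k U (pd i (\<lambda>q. f q * g q)) = Ck_on k U (\<lambda>q. pd i f q * g q + f q * pd i g q)"
      by (rule Ck_cong[OF Suc.prems(1)]) (use Suc.prems pd_mult in auto)
    moreover have "Ck_on k U f" "Ck_on k U g" using Suc.prems Ck_mono by blast+
    ultimately show ?thesis using Suc Ck_add by auto
  qed
  then show ?case using Suc.prems by auto
qed

lemma Ck_inverse: "open U \<Longrightarrow> Ck_on k U f \<Longrightarrow> (\<forall>q\<in>U. f q \<noteq> 0) \<Longrightarrow> Ck_on k U (\<lambda>q. inverse (f q))"
proof (induction k arbitrary: f)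
  case 0 then show ?case by (auto intro: continuous_on_inverse)
next
  case (Suc k)
  have "Ck_on k U (pd i (\<lambda>q. inverse (f q)))" for i
  proof -
    have "Ck_on k U (pd i (\<lambda>q. inverse (f q))) = Ck_on k U (\<lambda>q. (-1) * pd i f q * (inverse (f q) * inverse (f q)))"
      by (rule Ck_cong[OF Suc.prems(1)]) (use Suc.prems pd_inverse in \<open>auto simp: power2_eq_square\<close>)
    moreover have "Ck_on k U f" using Suc.prems Ck_mono by blast
    moreover have "Ck_on k U (\<lambda>q. inverse (f q))" using Suc.IH[OF Suc.prems(1) \<open>Ck_on k U f\<close>] Suc.prems by blast
    moreover have "Ck_on k U (pd i f)" using Suc.prems by simp
    ultimately show ?thesis using Ck_mult[OF Suc.prems(1)] Ck_const by presburger
  qed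
  moreover have "\<forall>p\<in>U. (\<lambda>q. inverse (f q)) differentiable at p"
    using Suc.prems by (auto intro!: derivative_intros)
  ultimately show ?case by auto
qed

lemma smooth_const: "smooth_on U (\<lambda>q. c)"
  unfolding smooth_on_def using Ck_const by blast
lemma smooth_add: "open U \<Longrightarrow> smooth_on U f \<Longrightarrow> smooth_on U g \<Longrightarrow> smooth_on U (\<lambda>q. f q + g q)"
  unfolding smooth_on_def using Ck_add by blast
lemma smooth_mult: "open U \<Longrightarrow> smooth_on U f \<Longrightarrow> smooth_on U g \<Longrightarrow> smooth_on U (\<lambda>q. f q * g q)"
  unfolding smooth_on_def using Ck_mult by blast
lemma smooth_inverse: "open U \<Longrightarrow> smooth_on U f \<Longrightarrow> (\<forall>q\<in>U. f q \<noteq> 0) \<Longrightarrow> smooth_on U (\<lambda>q. inverse (f q))"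
  unfolding smooth_on_def using Ck_inverse by blast
lemma smooth_pd: "smooth_on U f \<Longrightarrow> smooth_on U (pd i f)"
  unfolding smooth_on_def by (metis Ck_on.simps(2))
lemma smooth_cong: "open U \<Longrightarrow> (\<And>q. q \<in> U \<Longrightarrow> f q = g q) \<Longrightarrow> smooth_on U f \<Longrightarrow> smooth_on U g"
  unfolding smooth_on_def using Ck_cong by blast
lemma smooth_diff_at: "smooth_on U f \<Longrightarrow> p \<in> U \<Longrightarrow> f differentiable at p"
  unfolding smooth_on_def by (metis Ck_on.simps(2))
lemma smooth_minus: "open U \<Longrightarrow> smooth_on U f \<Longrightarrow> smooth_on U g \<Longrightarrow> smooth_on U (\<lambda>q. f q - g q)"
proof -
  assume a: "open U" "smooth_on U f" "smooth_on U g"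
  have "smooth_on U (\<lambda>q. f q + (-1) * g q)"
    by (intro smooth_add smooth_mult smooth_const a)
  then show ?thesis by (rule smooth_cong[OF a(1), rotated]) simp
qed
lemma smooth_divide: "open U \<Longrightarrow> smooth_on U f \<Longrightarrow> smooth_on U g \<Longrightarrow> (\<forall>q\<in>U. g q \<noteq> 0) \<Longrightarrow> smooth_on U (\<lambda>q. f q / g q)"
proof -
  assume a: "open U" "smooth_on U f" "smooth_on U g" "\<forall>q\<in>U. g q \<noteq> 0"
  have "smooth_on U (\<lambda>q. f q * inverse (g q))"
    by (intro smooth_mult smooth_inverse a)
  then show ?thesis by (rule smooth_cong[OF a(1), rotated]) (simp add: divide_inverse)
qed




definition diagm :: "(3 \<Rightarrow> real^3 \<Rightarrow> real) \<Rightarrow> real^3 \<Rightarrow> real^3^3" where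
  "diagm h q = (\<chi> i j. if i = j then h i q else 0)"

lemma matrix_inv_eqI:
  fixes M N :: "real^3^3"
  assumes "M ** N = mat 1" "N ** M = mat 1"
  shows "matrix_inv M = N"
proof -
  have ex: "\<exists>N'. M ** N' = mat 1 \<and> N' ** M = mat 1" using assms by blast
  define M' where "M' = matrix_inv M"
  have M': "M ** M' = mat 1" "M' ** M = mat 1"
    using someI_ex[OF ex] unfolding M'_def matrix_inv_def by auto
  have "M' = M' ** (M ** N)" using assms by (simp add: matrix_mul_rid)
  also have "\<dots> = (M' ** M) ** N" by (simp add: matrix_mul_assoc)
  also have "\<dots> = N" using M' by (simp add: matrix_mul_lid)
  finally show ?thesis unfolding M'_def .
qed

lemma ginv_diagm:
  assumes "\<And>i. h i q \<noteq> 0"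
  shows "ginv (diagm h) q = (\<chi> i j. if i = j then inverse (h i q) else 0)"
  unfolding ginv_def
  by (rule matrix_inv_eqI)
     (use assms in \<open>simp_all add: matrix_matrix_mult_def mat_def vec_eq_iff diagm_def sum_3 forall_3\<close>)

lemma diagm_fun: "(\<lambda>q. diagm h q $ j $ l) = (if j = l then h j else (\<lambda>q. 0))"
  by (auto simp: diagm_def)

definition NN :: "(3 \<Rightarrow> real^3 \<Rightarrow> real) \<Rightarrow> 3 \<Rightarrow> 3 \<Rightarrow> 3 \<Rightarrow> real^3 \<Rightarrow> real" where
  "NN h k i j q = (if j = k then pd i (h k) q else 0) + (if i = k then pd j (h k) q else 0)
     - (if i = j then pd k (h i) q else 0)"

definition Gam :: "(3 \<Rightarrow> real^3 \<Rightarrow> real) \<Rightarrow> 3 \<Rightarrow> 3 \<Rightarrow> 3 \<Rightarrow> real^3 \<Rightarrow> real" where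
  "Gam h k i j q = (1/2) * (inverse (h k q) * NN h k i j q)"

lemma sum_delta3: "(\<Sum>l\<in>(UNIV::3 set). (if k = l then a else 0) * X l) = a * (X k::real)"
  using exhaust_3[of k] by (auto simp: sum_3)

lemma christ_diagm:
  assumes "\<And>i. h i q \<noteq> 0"
  shows "christ (diagm h) k i j q = Gam h k i j q"
proof -
  have e: "pd a (\<lambda>q. diagm h q $ b $ c) q = (if b = c then pd a (h b) q else 0)" for a b c
    by (simp add: diagm_fun)
  have "christ (diagm h) k i j q = (1/2) * (inverse (h k q) * ((if j = k then pd i (h j) q else 0)
     + (if i = k then pd j (h i) q else 0) - (if i = j then pd k (h i) q else 0)))"
    unfolding christ_def ginv_diagm[of h q, OF assms] e by (simp only: vec_lambda_beta sum_delta3)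
  then show ?thesis unfolding Gam_def NN_def by (simp cong: if_cong)
qed

lemma pd_if0: "pd m (\<lambda>q. if c then f q else 0) p = (if c then pd m f p else 0)"
  by (cases c) simp_all

lemma diff_if0: "f differentiable at p \<Longrightarrow> (\<lambda>q. if c then f q else 0) differentiable at p"
  by (cases c) simp_all

lemma pd_cmult: "f differentiable at p \<Longrightarrow> pd i (\<lambda>q. c * f q) p = c * pd i f p"
  using pd_mult[of "\<lambda>q. c" p f i] by simp

definition dNN :: "(3 \<Rightarrow> real^3 \<Rightarrow> real) \<Rightarrow> 3 \<Rightarrow> 3 \<Rightarrow> 3 \<Rightarrow> 3 \<Rightarrow> real^3 \<Rightarrow> real" where
  "dNN h m k i j p = (if j = k then pd m (pd i (h k)) p else 0) + (if i = k then pd m (pd j (h k)) p else 0)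
     - (if i = j then pd m (pd k (h i)) p else 0)"

definition dGam :: "(3 \<Rightarrow> real^3 \<Rightarrow> real) \<Rightarrow> 3 \<Rightarrow> 3 \<Rightarrow> 3 \<Rightarrow> 3 \<Rightarrow> real^3 \<Rightarrow> real" where
  "dGam h m k i j p = (1/2) * (- pd m (h k) p * (inverse (h k p))^2 * NN h k i j p
       + inverse (h k p) * dNN h m k i j p)"

locale dsetup =
  fixes U :: "(real^3) set" and h :: "3 \<Rightarrow> real^3 \<Rightarrow> real" and p :: "real^3"
  assumes U: "open U" and pU: "p \<in> U" and nz: "\<And>q i. q \<in> U \<Longrightarrow> h i q \<noteq> 0"
    and d1: "\<And>i. h i differentiable at p" and d2: "\<And>i m. pd m (h i) differentiable at p"
begin

lemma NN_diff: "NN h k i j differentiable at p"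
  unfolding NN_def[abs_def] using d2 by (intro differentiable_add differentiable_diff diff_if0) auto

lemma pd_NN: "pd m (NN h k i j) p = dNN h m k i j p"
proof -
  have "pd m (NN h k i j) p = pd m (\<lambda>q. ((if j = k then pd i (h k) q else 0) + (if i = k then pd j (h k) q else 0))
     - (if i = j then pd k (h i) q else 0)) p" unfolding NN_def by simp
  also have "\<dots> = dNN h m k i j p"
    unfolding dNN_def using d2
    by (subst pd_diff, (intro differentiable_add diff_if0; auto), (intro diff_if0; auto))
       (subst pd_add, (intro diff_if0; auto), (intro diff_if0; auto), simp add: pd_if0)
  finally show ?thesis .
qed

lemma pd_christ: "pd m (christ (diagm h) k i j) p = dGam h m k i j p"
proof -
  have "pd m (christ (diagm h) k i j) p = pd m (Gam h k i j) p"
    by (rule pd_cong[OF U pU]) (rule christ_diagm, rule nz)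
  also have "\<dots> = (1/2) * pd m (\<lambda>q. inverse (h k q) * NN h k i j q) p"
    unfolding Gam_def using d1 NN_diff nz[OF pU]
    by (subst pd_cmult) (auto intro!: differentiable_mult differentiable_inverse)
  also have "\<dots> = dGam h m k i j p"
    unfolding dGam_def using d1 NN_diff nz[OF pU]
    by (subst pd_mult) (auto intro!: differentiable_inverse simp: pd_inverse pd_NN)
  finally show ?thesis .
qed

lemma curv_diagm: "curv (diagm h) i j k l p = dGam h i l j k p - dGam h j l i k p
   + (\<Sum>m\<in>UNIV. Gam h m j k p * Gam h l i m p - Gam h m i k p * Gam h l j m p)"
  unfolding curv_def pd_christ using christ_diagm[of h p] nz[OF pU] by simp

end




lemma sum_axis_l: "(\<Sum>a\<in>(UNIV::3 set). axis i (1::real) $ a * F a) = (F i :: real)"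
  using exhaust_3[of i] by (auto simp: sum_3 axis_def)

lemma sum_axis_r: "(\<Sum>a\<in>(UNIV::3 set). F a * axis i (1::real) $ a) = (F i :: real)"
  using exhaust_3[of i] by (auto simp: sum_3 axis_def)

lemma bil_diagm: "bil (diagm h) p x y = (\<Sum>i\<in>UNIV. x$i * h i p * y$i)"
  by (simp add: bil_def diagm_def sum_3)

lemma bil_diagm_axis: "bil (diagm h) p x (axis j 1) = x$j * h j p"
  unfolding bil_diagm by (rule sum_axis_r)

lemma curv_vec_axis: "curv_vec G p (axis i 1) y z $ l = (\<Sum>b\<in>UNIV. \<Sum>c\<in>UNIV. y$b * z$c * curv G i b c l p)"
  unfolding curv_vec_def by (simp add: mult.assoc sum_distrib_left[symmetric] sum_axis_l)

definition Ric :: "(3 \<Rightarrow> real^3 \<Rightarrow> real) \<Rightarrow> 3 \<Rightarrow> 3 \<Rightarrow> real^3 \<Rightarrow> real" where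
  "Ric h b c p = (\<Sum>i\<in>UNIV. curv (diagm h) i b c i p)"

lemma ricci_diagm:
  assumes "\<And>i. h i p \<noteq> 0"
  shows "ricci (diagm h) p y z = (\<Sum>b\<in>UNIV. \<Sum>c\<in>UNIV. y$b * z$c * Ric h b c p)"
proof -
  have "ricci (diagm h) p y z = (\<Sum>i\<in>UNIV. \<Sum>b\<in>UNIV. \<Sum>c\<in>UNIV. y$b * z$c * curv (diagm h) i b c i p)"
    unfolding ricci_def ginv_diagm[of h p, OF assms] curv4_def bil_diagm_axis curv_vec_axis
    by (simp only: vec_lambda_beta sum_delta3) (rule sum.cong, use assms in auto)
  also have "\<dots> = (\<Sum>b\<in>UNIV. \<Sum>c\<in>UNIV. y$b * z$c * Ric h b c p)"
    unfolding Ric_def by (simp add: sum_3 algebra_simps)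
  finally show ?thesis .
qed

lemma ricci_axis:
  assumes "\<And>i. h i p \<noteq> 0"
  shows "ricci (diagm h) p (axis b 1) (axis c 1) = Ric h b c p"
  unfolding ricci_diagm[of h p, OF assms] by (simp only: mult.assoc sum_distrib_left[symmetric] sum_axis_l)

lemma tau_diagm:
  assumes "\<And>i. h i p \<noteq> 0"
  shows "tau (diagm h) p = (\<Sum>i\<in>UNIV. inverse (h i p) * Ric h i i p)"
  unfolding tau_def ginv_diagm[of h p, OF assms] ricci_axis[of h p, OF assms] by (simp add: sum_3)

lemma tau_star_diagm:
  assumes "\<And>i. h i p \<noteq> 0" "\<And>i. g i p \<noteq> 0"
  shows "tau_star (diagm g) (diagm h) p = (\<Sum>i\<in>UNIV. inverse (g i p) * Ric h i i p)"
  unfolding tau_star_def ginv_diagm[of g p, OF assms(2)] ricci_axis[of h p, OF assms(1)] by (simp add: sum_3)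




lemma smooth_if0: "smooth_on U f \<Longrightarrow> smooth_on U (\<lambda>q. if c then f q else 0)"
  by (cases c) (simp_all add: smooth_const)

lemma smooth_sum3: "open U \<Longrightarrow> (\<And>x. smooth_on U (f x)) \<Longrightarrow> smooth_on U (\<lambda>q. \<Sum>x\<in>(UNIV::3 set). f x q)"
  unfolding sum_3 by (intro smooth_add) auto

locale smset =
  fixes U :: "(real^3) set" and h :: "3 \<Rightarrow> real^3 \<Rightarrow> real"
  assumes U: "open U" and sm: "\<And>i. smooth_on U (h i)" and nz: "\<And>q i. q \<in> U \<Longrightarrow> h i q \<noteq> 0"
begin

lemma ds: "q \<in> U \<Longrightarrow> dsetup U h q"
  by unfold_locales (auto simp: U nz smooth_diff_at[OF sm] smooth_diff_at[OF smooth_pd[OF sm]])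

lemma sm_NN: "smooth_on U (NN h k i j)"
  unfolding NN_def[abs_def] by (intro smooth_add smooth_minus smooth_if0 smooth_pd sm U)

lemma sm_dNN: "smooth_on U (dNN h m k i j)"
  unfolding dNN_def[abs_def] by (intro smooth_add smooth_minus smooth_if0 smooth_pd sm U)

lemma sm_Gam: "smooth_on U (Gam h k i j)"
  unfolding Gam_def[abs_def] by (intro smooth_mult smooth_inverse sm_NN smooth_const sm U) (use nz in auto)

lemma sm_dGam: "smooth_on U (dGam h m k i j)"
  unfolding dGam_def[abs_def] power2_eq_square
  by (intro smooth_mult smooth_add smooth_inverse sm_NN sm_dNN smooth_const sm U smooth_pd
      smooth_minus[of U "\<lambda>q. 0", simplified]) (use nz in auto)

lemma sm_curv: "smooth_on U (curv (diagm h) i j k l)"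
proof -
  have "smooth_on U (\<lambda>q. dGam h i l j k q - dGam h j l i k q
   + (\<Sum>m\<in>UNIV. Gam h m j k q * Gam h l i m q - Gam h m i k q * Gam h l j m q))"
    by (intro smooth_add smooth_minus smooth_sum3 smooth_mult sm_Gam sm_dGam U)
  then show ?thesis
    by (rule smooth_cong[OF U, rotated]) (simp add: dsetup.curv_diagm[OF ds])
qed

lemma sm_Ric: "smooth_on U (Ric h b c)"
  unfolding Ric_def[abs_def] by (intro smooth_sum3 sm_curv U)

lemma sm_tau: "smooth_on U (tau (diagm h))"
proof -
  have "smooth_on U (\<lambda>q. \<Sum>i\<in>UNIV. inverse (h i q) * Ric h i i q)"
    by (intro smooth_sum3 smooth_mult smooth_inverse sm_Ric sm U) (use nz in auto)
  then show ?thesis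
    by (rule smooth_cong[OF U, rotated]) (simp add: tau_diagm nz)
qed

lemma sm_tau_star:
  assumes "\<And>i. smooth_on U (g i)" "\<And>q i. q \<in> U \<Longrightarrow> g i q \<noteq> 0"
  shows "smooth_on U (tau_star (diagm g) (diagm h))"
proof -
  have "smooth_on U (\<lambda>q. \<Sum>i\<in>UNIV. inverse (g i q) * Ric h i i q)"
    by (intro smooth_sum3 smooth_mult smooth_inverse sm_Ric assms U) (use assms in auto)
  then show ?thesis
    by (rule smooth_cong[OF U, rotated]) (simp add: tau_star_diagm nz assms)
qed

end




definition hg :: "(real^3 \<Rightarrow> real) \<Rightarrow> (real^3 \<Rightarrow> real) \<Rightarrow> 3 \<Rightarrow> real^3 \<Rightarrow> real" where
  "hg A B i = (if i = 3 then B else A)"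
definition ht :: "(real^3 \<Rightarrow> real) \<Rightarrow> (real^3 \<Rightarrow> real) \<Rightarrow> 3 \<Rightarrow> real^3 \<Rightarrow> real" where
  "ht A B i = (if i = 3 then B else (\<lambda>q. - A q))"

lemma hg_simps[simp]: "hg A B 1 = A" "hg A B 2 = A" "hg A B 3 = B"
  by (simp_all add: hg_def)
lemma ht_simps[simp]: "ht A B 1 = (\<lambda>q. - A q)" "ht A B 2 = (\<lambda>q. - A q)" "ht A B 3 = B"
  by (simp_all add: ht_def)

lemma gmet_diagm: "gmet A B = diagm (hg A B)"
  by (rule ext) (auto simp: gmet_def diagm_def hg_def vec_eq_iff)

lemma Pmat_eq: "Pmat = (\<chi> i j. if i = j then (if i = 3 then 1 else -1) else 0)"
  unfolding Pmat_def Qmat_def by (simp add: matrix_matrix_mult_def vec_eq_iff forall_3 sum_3)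

lemma gtil_diagm: "gtil A B = diagm (ht A B)"
  unfolding gtil_def Pmat_eq
  by (rule ext) (simp add: gmet_def diagm_def ht_def matrix_matrix_mult_def vec_eq_iff forall_3 sum_3)




locale conc =
  fixes U :: "(real^3) set" and A B :: "real^3 \<Rightarrow> real" and p :: "real^3"
  assumes U: "open U" and pU: "p \<in> U" and sA: "smooth_on U A" and sB: "smooth_on U B"
    and Apos: "\<And>q. q \<in> U \<Longrightarrow> A q > 0" and Bpos: "\<And>q. q \<in> U \<Longrightarrow> B q > 0"
begin

lemma smA: "smooth_on U (\<lambda>q. - A q)"
  by (rule smooth_cong[OF U _ smooth_mult[OF U smooth_const sA, of "-1"]]) simp

lemma sm_hg: "smset U (hg A B)"
  by unfold_locales (auto simp: U hg_def sA sB dest: Apos Bpos)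

lemma sm_ht: "smset U (ht A B)"
  by unfold_locales (auto simp: U ht_def sB smA dest: Apos Bpos)

lemma dg: "dsetup U (hg A B) p" using smset.ds[OF sm_hg pU] .
lemma dt: "dsetup U (ht A B) p" using smset.ds[OF sm_ht pU] .

lemma An: "A p \<noteq> 0" using Apos[OF pU] by simp
lemma Bn: "B p \<noteq> 0" using Bpos[OF pU] by simp

lemma pdnA: "pd m (\<lambda>q. - A q) p = - pd m A p"
  using pd_cmult[of A p m "-1"] smooth_diff_at[OF sA pU] by simp

lemma pdnA2: "pd m (pd n (\<lambda>q. - A q)) p = - pd m (pd n A) p"
proof -
  have "pd m (pd n (\<lambda>q. - A q)) p = pd m (\<lambda>q. (-1) * pd n A q) p"
    by (rule pd_cong[OF U pU]) (use pd_cmult[of A _ n "-1"] smooth_diff_at[OF sA] in auto)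
  also have "\<dots> = - pd m (pd n A) p"
    using pd_cmult[of "pd n A" p m "-1"] smooth_diff_at[OF smooth_pd[OF sA] pU] by simp
  finally show ?thesis .
qed

lemmas cexp = Ric_def sum_3 dsetup.curv_diagm[OF dg] dsetup.curv_diagm[OF dt]
   Gam_def dGam_def NN_def dNN_def pdnA pdnA2

lemma R12: "Ric (ht A B) 1 2 p = - curv (diagm (hg A B)) 1 2 1 1 p - curv (diagm (hg A B)) 1 3 2 3 p"
  using An Bn by (simp add: cexp; simp add: field_simps; (algebra)?)

lemma R13: "Ric (ht A B) 1 3 p = (B p / A p) * curv (diagm (hg A B)) 1 2 2 3 p - curv (diagm (hg A B)) 1 3 3 3 p"
  using An Bn by (simp add: cexp; simp add: field_simps; (algebra)?)

lemma R21: "Ric (ht A B) 2 1 p = curv (diagm (hg A B)) 1 2 1 1 p + curv (diagm (hg A B)) 1 2 3 3 p - curv (diagm (hg A B)) 1 3 2 3 p"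
  using An Bn by (simp add: cexp; simp add: field_simps; (algebra)?)

lemma R22: "Ric (ht A B) 2 2 p - Ric (ht A B) 1 1 p = curv (diagm (hg A B)) 1 3 1 3 p - curv (diagm (hg A B)) 2 3 2 3 p"
  using An Bn by (simp add: cexp; simp add: field_simps; (algebra)?)

lemma R23: "Ric (ht A B) 2 3 p = - (B p / A p) * curv (diagm (hg A B)) 1 2 1 3 p - curv (diagm (hg A B)) 2 3 3 3 p"
  using An Bn by (simp add: cexp; simp add: field_simps; (algebra)?)

lemma R31: "Ric (ht A B) 3 1 p = (B p / A p) * curv (diagm (hg A B)) 1 2 2 3 p + 2 * curv (diagm (hg A B)) 1 3 1 1 p"
  using An Bn by (simp add: cexp; simp add: field_simps; (algebra)?)

lemma R32: "Ric (ht A B) 3 2 p = (B p / A p) * curv (diagm (hg A B)) 1 2 1 3 p - 2 * curv (diagm (hg A B)) 1 3 1 2 p"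
  using An Bn by (simp add: cexp; simp add: field_simps; (algebra)?)

lemma htnz: "ht A B i p \<noteq> 0" using smset.nz[OF sm_ht pU] .
lemma hgnz: "hg A B i p \<noteq> 0" using smset.nz[OF sm_hg pU] .

lemma main_eq:
  assumes flat: "\<forall>i j k l. curv (gmet A B) i j k l p = 0"
  shows "ricci (gtil A B) p x y =
        (3 * tau_star (gmet A B) (gtil A B) p + tau (gtil A B) p) / 8 * bil (gmet A B) p x y
      + (3 * tau (gtil A B) p + tau_star (gmet A B) (gtil A B) p) / 8 * bil (gtil A B) p x y"
proof -
  have f: "curv (diagm (hg A B)) i j k l p = 0" for i j k l using flat gmet_diagm by simp
  have z: "Ric (ht A B) 1 2 p = 0" "Ric (ht A B) 1 3 p = 0" "Ric (ht A B) 2 1 p = 0"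
     "Ric (ht A B) 2 3 p = 0" "Ric (ht A B) 3 1 p = 0" "Ric (ht A B) 3 2 p = 0"
     "Ric (ht A B) 2 2 p = Ric (ht A B) 1 1 p"
    using R12 R13 R21 R22 R23 R31 R32 by (simp_all add: f)
  show ?thesis
    unfolding gtil_diagm gmet_diagm ricci_diagm[of "ht A B" p, OF htnz]
      tau_diagm[of "ht A B" p, OF htnz] tau_star_diagm[of "ht A B" p "hg A B", OF htnz hgnz] bil_diagm
    using An Bn by (simp add: sum_3 z; simp add: field_simps; (algebra)?)
qed

end

theorem proposition4p5:
  fixes U :: "(real^3) set" and A B :: "real^3 \<Rightarrow> real"
  assumes "open U"
    and "smooth_on U A" and "smooth_on U B"
    and "\<forall>p\<in>U. A p > 0" and "\<forall>p\<in>U. B p > 0"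
    and "\<forall>p\<in>U. \<forall>i j k l. curv (gmet A B) i j k l p = 0"
  shows "almost_Einstein U (gmet A B) (gtil A B) \<and>
    (\<forall>p\<in>U. \<forall>x y. ricci (gtil A B) p x y =
        (3 * tau_star (gmet A B) (gtil A B) p + tau (gtil A B) p) / 8 * bil (gmet A B) p x y
      + (3 * tau (gtil A B) p + tau_star (gmet A B) (gtil A B) p) / 8 * bil (gtil A B) p x y)"
proof -
  have C: "conc U A B p" if "p \<in> U" for p
    by unfold_locales (use assms that in auto)
  have E: "\<forall>p\<in>U. \<forall>x y. ricci (gtil A B) p x y =
        (3 * tau_star (gmet A B) (gtil A B) p + tau (gtil A B) p) / 8 * bil (gmet A B) p x y
      + (3 * tau (gtil A B) p + tau_star (gmet A B) (gtil A B) p) / 8 * bil (gtil A B) p x y"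
    using conc.main_eq[OF C] assms(6) by blast
  have sg: "smset U (hg A B)" and st: "smset U (ht A B)"
    using assms by (auto simp: smset_def hg_def ht_def smooth_cong[OF assms(1) _ smooth_mult[OF assms(1) smooth_const assms(2), of "-1"]])
  have s1: "smooth_on U (tau (gtil A B))"
    unfolding gtil_diagm by (rule smset.sm_tau[OF st])
  have s2: "smooth_on U (tau_star (gmet A B) (gtil A B))"
    unfolding gtil_diagm gmet_diagm by (rule smset.sm_tau_star[OF st]) (use sg in \<open>auto simp: smset_def\<close>)
  have "smooth_on U (\<lambda>p. (3 * tau_star (gmet A B) (gtil A B) p + tau (gtil A B) p) / 8)"
    "smooth_on U (\<lambda>p. (3 * tau (gtil A B) p + tau_star (gmet A B) (gtil A B) p) / 8)"
    by (intro smooth_divide smooth_add smooth_mult smooth_const s1 s2 assms(1); simp)+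
  then have "almost_Einstein U (gmet A B) (gtil A B)"
    unfolding almost_Einstein_def using E by blast
  then show ?thesis using E by blast
qed


end
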